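(* Let $q\ge0$, $N>0$, $g(v)=N\min(1,|v|^{-q})$, and let $f:\mathbb R^d\to[0,\infty)$ satisfy the hydrodynamic bounds, $f\le g$ on $\mathbb R^d$ and $f(v)=g(v)$ at some $v\in\mathbb R^d$. Then at this $v$: if $\gamma\ge0$, $$Q_{ns}(f,f)(v)\lesssim(1+|v|)^\gamma g(v),$$ while if $\gamma<0$, $$Q_{ns}(f,f)(v)\lesssim 2^{-\frac{q\gamma}d}g(v)^{1-\frac\gamma d}+(1+|v|)^\gamma g(v).$$ Moreover, when $q=0$ and $\gamma\in(-d,0)$, there is a function $\psi:(0,\infty)\to(0,\infty)$ with $\psi(r)\to0$ as $r\to+\infty$, depending on $M_0$ and $H_0$, such that $$Q_{ns}(f,f)(v)\lesssim g(v)^{1-\frac\gamma d}\psi(g(v))+(1+|v|)^\gamma g(v).$$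
   Context: Fix $d\ge2$, $s\in(0,1)$, $\gamma\in\mathbb R$ with $\gamma+2s\in[0,2]$; collision kernel $B(r,\cos\theta)=r^\gamma b(\cos\theta)$ with $b(\cos\theta)=(\sin\frac\theta2)^{-(d-2)+\gamma}(\tan\frac\theta2)^{-(\gamma+2s+1)}\tilde b(\cos\theta)$, $\tilde b$ smooth with $0<\tilde b_0\le\tilde b\le\tilde b_1$. Hydrodynamic bounds: $m_0\le\int f\le M_0$, $\int f|v|^2\le E_0$, $\int f\ln f\le H_0$. $A\lesssim B$ means $A\le CB$ with $C$ depending only on $d,\gamma,s,\tilde b_0,\tilde b_1,m_0,M_0,E_0,H_0$. The non-singular part of the collision operator is $Q_{ns}(f_1,f_2)(v)=C_S\,f_2(v)\int_{\mathbb R^d}f_1(v_* )|v-v_*|^\gamma\,dv_*$, where $C_S=|\mathbb S^{d-2}|\int_0^{\pi/2}(\sin\theta)^{d-2}\big[(\cos\frac\theta2)^{-d-\gamma}-1\big]b(\cos\theta)\,d\theta\in(0,\infty)$. *)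

theory Defs
  imports "HOL-Analysis.Analysis"
begin

text \<open>Surface measure of the unit sphere S^{k-1} in R^k: 2 pi^{k/2} / Gamma(k/2).
  The constant |S^{d-2}| is sphere_area (d - 1).\<close>
definition sphere_area :: "nat \<Rightarrow> real" where
  "sphere_area k = 2 * pi powr (real k / 2) / Gamma (real k / 2)"

definition smooth_near_interval :: "(real \<Rightarrow> real) \<Rightarrow> bool" where
  "smooth_near_interval bt \<longleftrightarrow>
     (\<exists>U. open U \<and> {-1..1} \<subseteq> U \<and> (\<forall>k. ((deriv ^^ k) bt) differentiable_on U))"

text \<open>Angular kernel b(cos theta), written as a function of theta.\<close>
definition b_ang :: "nat \<Rightarrow> real \<Rightarrow> real \<Rightarrow> (real \<Rightarrow> real) \<Rightarrow> real \<Rightarrow> real" where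
  "b_ang d \<gamma> s bt \<theta> =
     sin (\<theta>/2) powr (\<gamma> - (real d - 2)) * tan (\<theta>/2) powr (- (\<gamma> + 2 * s + 1)) * bt (cos \<theta>)"

definition C_S :: "nat \<Rightarrow> real \<Rightarrow> real \<Rightarrow> (real \<Rightarrow> real) \<Rightarrow> real" where
  "C_S d \<gamma> s bt = sphere_area (d - 1) *
     (LBINT \<theta>=0..pi/2. sin \<theta> ^ (d - 2) * (cos (\<theta>/2) powr (- real d - \<gamma>) - 1) * b_ang d \<gamma> s bt \<theta>)"

definition Q_ns :: "real \<Rightarrow> real \<Rightarrow> (real \<Rightarrow> real) \<Rightarrow> (real^'n \<Rightarrow> real) \<Rightarrow> (real^'n \<Rightarrow> real) \<Rightarrow> real^'n \<Rightarrow> real" where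
  "Q_ns \<gamma> s bt f1 f2 v = C_S CARD('n) \<gamma> s bt * f2 v *
     (LINT w|lborel. f1 w * norm (v - w) powr \<gamma>)"

definition hydro_bounds :: "real \<Rightarrow> real \<Rightarrow> real \<Rightarrow> real \<Rightarrow> (real^'n \<Rightarrow> real) \<Rightarrow> bool" where
  "hydro_bounds m0 M0 E0 H0 f \<longleftrightarrow>
     f \<in> borel_measurable lborel \<and> (\<forall>v. 0 \<le> f v) \<and>
     integrable lborel f \<and> integrable lborel (\<lambda>v. f v * norm v ^ 2) \<and>
     integrable lborel (\<lambda>v. f v * ln (f v)) \<and>
     m0 \<le> (LINT v|lborel. f v) \<and> (LINT v|lborel. f v) \<le> M0 \<and>
     (LINT v|lborel. f v * norm v ^ 2) \<le> E0 \<and>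
     (LINT v|lborel. f v * ln (f v)) \<le> H0"

text \<open>g(v) = N min(1, |v|^{-q}), with |0|^{-q} = +infinity for q > 0.\<close>
definition gfun :: "real \<Rightarrow> real \<Rightarrow> real^'n \<Rightarrow> real" where
  "gfun N q v = (if v = 0 then N else N * min 1 (norm v powr (- q)))"

end

theory Submission
  imports Defs
begin

lemma real_dyadic:
  fixes y :: real assumes "1 \<le> y"
  shows "\<exists>k::nat. 2^k \<le> y \<and> y < 2^(k+1)"
proof -
  define m where "m = nat \<lfloor>y\<rfloor>"
  have m1: "m \<ge> 1" using assms unfolding m_def by linarith
  obtain k where k: "2^k \<le> m" "m < 2^(k+1)" using ex_power_ivl1[of 2 m] m1 by auto
  have "real m \<le> y" "y < real m + 1" unfolding m_def using assms by linarith+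
  moreover have "real (2^k) \<le> real m" using k(1) by (simp only: of_nat_le_iff)
  hence "(2::real)^k \<le> real m" by simp
  moreover have "real (m + 1) \<le> real (2^(k+1))" using k(2) by (simp only: of_nat_le_iff)
  hence "real m + 1 \<le> (2::real)^(k+1)" by simp
  ultimately show ?thesis by (intro exI[of _ k]) linarith
qed

lemma ennreal_le_suminf: "(f::nat\<Rightarrow>ennreal) k \<le> suminf f"
  using sum_le_suminf[of f "{k}"] by (simp add: summableI)

definition cK :: "nat \<Rightarrow> real \<Rightarrow> real" where
  "cK n \<gamma> = unit_ball_vol (real n) * 2 powr (-\<gamma>) / (1 - 2 powr (-(real n + \<gamma>)))"

lemma cK_pos: "real n + \<gamma> > 0 \<Longrightarrow> cK n \<gamma> > 0"
  unfolding cK_def by (intro divide_pos_pos mult_pos_pos) (auto simp: powr_less_one)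

lemma term_eq:
  fixes \<rho> \<gamma> :: real and d k :: nat assumes "\<rho> > 0"
  shows "(\<rho> * 2 powr (-(real k+1))) powr \<gamma> * (unit_ball_vol (real d) * (\<rho> * 2 powr (- real k))^d)
     = unit_ball_vol (real d) * 2 powr (-\<gamma>) * \<rho> powr (real d + \<gamma>) * (2 powr (-(real d + \<gamma>)))^k"
proof -
  have "(\<rho> * 2 powr (- real k))^d = \<rho> powr real d * 2 powr (- real k * real d)"
    using assms by (simp add: powr_realpow[symmetric] powr_mult powr_powr)
  moreover have "(\<rho> * 2 powr (-(real k+1))) powr \<gamma> = \<rho> powr \<gamma> * 2 powr (-(real k+1) * \<gamma>)"
    using assms by (simp add: powr_mult powr_powr)
  moreover have "(2 powr (-(real d + \<gamma>)))^k = 2 powr (-(real d + \<gamma>) * real k)"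
    by (simp add: powr_realpow[symmetric] powr_powr)
  moreover have "\<rho> powr (real d + \<gamma>) = \<rho> powr real d * \<rho> powr \<gamma>" by (rule powr_add)
  moreover have "(2::real) powr (-(real k+1) * \<gamma>) * 2 powr (- real k * real d) = 2 powr (-\<gamma>) * 2 powr (-(real d + \<gamma>) * real k)"
  proof -
    have x: "-(real k+1) * \<gamma> + (- real k * real d) = -\<gamma> + (-(real d + \<gamma>) * real k)" by algebra
    have "(2::real) powr (-(real k+1) * \<gamma>) * 2 powr (- real k * real d) = 2 powr (-(real k+1) * \<gamma> + (- real k * real d))"
      by (rule powr_add[symmetric])
    also have "\<dots> = 2 powr (-\<gamma> + (-(real d + \<gamma>) * real k))" by (simp only: x)
    also have "\<dots> = 2 powr (-\<gamma>) * 2 powr (-(real d + \<gamma>) * real k)" by (rule powr_add)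
    finally show ?thesis .
  qed
  ultimately show ?thesis
    by (simp only: mult_ac)
qed

lemma kernel_ball:
  fixes v :: "'a::euclidean_space" and \<gamma> \<rho> :: real
  assumes g: "\<gamma> < 0" "real DIM('a) + \<gamma> > 0" and r: "\<rho> > 0"
  shows "(\<integral>\<^sup>+w. indicator (cball v \<rho>) w * ennreal (norm (v - w) powr \<gamma>) \<partial>lborel)
     \<le> ennreal (cK DIM('a) \<gamma> * \<rho> powr (real DIM('a) + \<gamma>))"
proof -
  define F where "F k w = ennreal ((\<rho> * 2 powr (-(real k+1))) powr \<gamma>) * indicator (cball v (\<rho> * 2 powr (- real k))) w" for k :: nat and w :: 'a
  have pw: "indicator (cball v \<rho>) w * ennreal (norm (v - w) powr \<gamma>) \<le> (\<Sum>k. F k w)" for w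
  proof (cases "w \<in> cball v \<rho> \<and> w \<noteq> v")
    case False
    then show ?thesis by (auto simp: indicator_def)
  next
    case True
    hence n0: "norm (v - w) > 0" and n1: "norm (v - w) \<le> \<rho>" by (auto simp: dist_norm)
    have "1 \<le> \<rho> / norm (v - w)" using n0 n1 by simp
    then obtain k :: nat where k: "2^k \<le> \<rho> / norm (v - w)" "\<rho> / norm (v - w) < 2^(k+1)"
      using real_dyadic by blast
    have p2: "(2::real) powr (- real k) = 1 / 2^k" by (simp add: powr_minus powr_realpow divide_inverse)
    have p3: "(2::real) powr (-(real k+1)) = 1 / 2^(k+1)"
    proof -
      have e: "(2::real) powr (real (k+1)) = 2^(k+1)" by (rule powr_realpow) simp
      have "(2::real) powr (-(real k+1)) = inverse (2 powr (real (k+1)))"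
        using powr_minus[of 2 "real (k+1)"] by (simp add: algebra_simps)
      then show ?thesis by (metis e inverse_eq_divide)
    qed
    have "2^k * norm (v - w) \<le> \<rho>" using k(1) n0 by (simp add: pos_le_divide_eq)
    hence "norm (v - w) \<le> \<rho> / 2^k" by (simp add: pos_le_divide_eq mult.commute)
    hence a1: "norm (v - w) \<le> \<rho> * 2 powr (- real k)" unfolding p2 by simp
    have "\<rho> < 2^(k+1) * norm (v - w)" using k(2) n0 by (simp add: pos_divide_less_eq)
    hence "\<rho> / 2^(k+1) \<le> norm (v - w)" by (simp add: pos_divide_le_eq mult.commute)
    hence a2: "\<rho> * 2 powr (-(real k+1)) \<le> norm (v - w)" unfolding p3 by simp
    have "norm (v - w) powr \<gamma> \<le> (\<rho> * 2 powr (-(real k+1))) powr \<gamma>"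
      by (rule powr_mono2') (use g a2 r in auto)
    hence "indicator (cball v \<rho>) w * ennreal (norm (v - w) powr \<gamma>) \<le> F k w"
      using True a1 by (simp add: F_def dist_norm ennreal_leI)
    also have "\<dots> \<le> (\<Sum>k. F k w)" by (rule ennreal_le_suminf)
    finally show ?thesis .
  qed
  have meas: "F k \<in> borel_measurable lborel" for k unfolding F_def
    by (intro borel_measurable_times_ennreal borel_measurable_const borel_measurable_indicator) simp
  define q where "q = (2::real) powr (-(real DIM('a) + \<gamma>))"
  have q: "0 \<le> q" "q < 1" unfolding q_def using g by (auto simp: powr_less_one)
  define c0 where "c0 = unit_ball_vol (real DIM('a)) * 2 powr (-\<gamma>) * \<rho> powr (real DIM('a) + \<gamma>)"
  have c0: "c0 \<ge> 0" unfolding c0_def by simp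
  have intF: "integral\<^sup>N lborel (F k) = ennreal (c0 * q^k)" for k
  proof -
    have "integral\<^sup>N lborel (F k) = ennreal ((\<rho> * 2 powr (-(real k+1))) powr \<gamma>) * emeasure lborel (cball v (\<rho> * 2 powr (- real k)))"
      unfolding F_def by (subst nn_integral_cmult_indicator) auto
    also have "\<dots> = ennreal ((\<rho> * 2 powr (-(real k+1))) powr \<gamma> * (unit_ball_vol (real DIM('a)) * (\<rho> * 2 powr (- real k))^DIM('a)))"
      using r by (subst emeasure_cball) (auto simp: ennreal_mult)
    also have "\<dots> = ennreal (c0 * q^k)" unfolding c0_def q_def using r by (subst term_eq) auto
    finally show ?thesis .
  qed
  have "(\<integral>\<^sup>+w. indicator (cball v \<rho>) w * ennreal (norm (v - w) powr \<gamma>) \<partial>lborel) \<le> (\<integral>\<^sup>+w. (\<Sum>k. F k w) \<partial>lborel)"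
    by (rule nn_integral_mono) (use pw in auto)
  also have "\<dots> = (\<Sum>k. integral\<^sup>N lborel (F k))" by (rule nn_integral_suminf) (use meas in auto)
  also have "\<dots> = (\<Sum>k. ennreal (c0 * q^k))" using intF by simp
  also have "\<dots> = ennreal (\<Sum>k. c0 * q^k)"
    by (rule suminf_ennreal2) (use c0 q in \<open>auto intro!: summable_mult summable_geometric\<close>)
  also have "(\<Sum>k. c0 * q^k) = c0 / (1 - q)"
  proof -
    have sg: "summable (\<lambda>k. q^k)" using q by (intro summable_geometric) simp
    have "(\<Sum>k. c0 * q^k) = c0 * (\<Sum>k. q^k)" using sg by (rule suminf_mult)
    also have "(\<Sum>k. q^k) = 1 / (1 - q)" using q by (intro suminf_geometric) simp
    finally show ?thesis by simp
  qed
  also have "c0 / (1 - q) = cK DIM('a) \<gamma> * \<rho> powr (real DIM('a) + \<gamma>)"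
    unfolding c0_def q_def cK_def by simp
  finally show ?thesis .
qed

lemma pm: "(\<lambda>w::'a::euclidean_space. norm (v - w) powr \<gamma>) \<in> borel_measurable lborel"
  by (intro powr_real_measurable borel_measurable_const) measurable

lemma nn_to_lint:
  fixes F :: "'a \<Rightarrow> real"
  assumes "F \<in> borel_measurable M" "\<And>x. 0 \<le> F x"
    and "(\<integral>\<^sup>+x. ennreal (F x) \<partial>M) \<le> ennreal B" "0 \<le> B"
  shows "integral\<^sup>L M F \<le> B"
proof -
  have "integral\<^sup>L M F = enn2real (\<integral>\<^sup>+x. ennreal (F x) \<partial>M)"
    by (rule integral_eq_nn_integral) (use assms in auto)
  also have "\<dots> \<le> enn2real (ennreal B)" by (rule enn2real_mono) (use assms in auto)
  also have "\<dots> = B" using assms by simp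
  finally show ?thesis .
qed

lemma local_est:
  fixes v :: "'a::euclidean_space" and h :: "'a \<Rightarrow> real"
  assumes g: "\<gamma> < 0" "real DIM('a) + \<gamma> > 0" and r: "\<rho> > 0" and A: "A \<ge> 0" and m: "m \<ge> 0"
    and hm: "h \<in> borel_measurable lborel" and h0: "\<And>w. 0 \<le> h w"
    and hint: "(\<integral>\<^sup>+w. ennreal (h w) \<partial>lborel) \<le> ennreal m"
    and hA: "\<And>w. w \<in> cball v \<rho> \<Longrightarrow> h w \<le> A"
  shows "(\<integral>\<^sup>+w. ennreal (h w * norm (v - w) powr \<gamma>) \<partial>lborel)
     \<le> ennreal (A * cK DIM('a) \<gamma> * \<rho> powr (real DIM('a) + \<gamma>) + m * \<rho> powr \<gamma>)"
proof -
  define K where "K w = indicator (cball v \<rho>) w * ennreal (norm (v - w) powr \<gamma>)" for w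
  have Km: "K \<in> borel_measurable lborel" unfolding K_def
    by (intro borel_measurable_times_ennreal borel_measurable_indicator measurable_compose[OF _ measurable_ennreal] pm) auto
  have pw: "ennreal (h w * norm (v - w) powr \<gamma>) \<le> ennreal A * K w + ennreal (\<rho> powr \<gamma>) * ennreal (h w)" for w
  proof (cases "w \<in> cball v \<rho>")
    case True
    have "h w * norm (v - w) powr \<gamma> \<le> A * norm (v - w) powr \<gamma>"
      using hA[OF True] by (intro mult_right_mono) auto
    hence "ennreal (h w * norm (v - w) powr \<gamma>) \<le> ennreal A * K w"
      using True A by (simp add: K_def ennreal_mult[symmetric] ennreal_leI)
    then show ?thesis by (rule order_trans) simp
  next
    case False
    hence n: "\<rho> \<le> norm (v - w)" by (simp add: dist_norm)
    have "norm (v - w) powr \<gamma> \<le> \<rho> powr \<gamma>" by (rule powr_mono2') (use g r n in auto)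
    hence "h w * norm (v - w) powr \<gamma> \<le> \<rho> powr \<gamma> * h w"
      using h0[of w] by (simp add: mult.commute mult_left_mono)
    hence "ennreal (h w * norm (v - w) powr \<gamma>) \<le> ennreal (\<rho> powr \<gamma> * h w)"
      by (rule ennreal_leI)
    also have "\<dots> = ennreal (\<rho> powr \<gamma>) * ennreal (h w)" using h0[of w] by (simp add: ennreal_mult)
    finally show ?thesis by (rule order_trans) simp
  qed
  have "(\<integral>\<^sup>+w. ennreal (h w * norm (v - w) powr \<gamma>) \<partial>lborel)
      \<le> (\<integral>\<^sup>+w. ennreal A * K w + ennreal (\<rho> powr \<gamma>) * ennreal (h w) \<partial>lborel)"
    by (rule nn_integral_mono) (use pw in auto)
  also have "\<dots> = ennreal A * (\<integral>\<^sup>+w. K w \<partial>lborel) + ennreal (\<rho> powr \<gamma>) * (\<integral>\<^sup>+w. ennreal (h w) \<partial>lborel)"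
    using Km hm by (simp add: nn_integral_add nn_integral_cmult)
  also have "\<dots> \<le> ennreal A * ennreal (cK DIM('a) \<gamma> * \<rho> powr (real DIM('a) + \<gamma>)) + ennreal (\<rho> powr \<gamma>) * ennreal m"
    by (intro add_mono mult_left_mono hint) (use kernel_ball[OF g r, of v] in \<open>auto simp: K_def\<close>)
  also have "\<dots> = ennreal (A * cK DIM('a) \<gamma> * \<rho> powr (real DIM('a) + \<gamma>) + m * \<rho> powr \<gamma>)"
  proof -
    have X: "0 \<le> cK DIM('a) \<gamma> * \<rho> powr (real DIM('a) + \<gamma>)" using cK_pos[OF g(2)] by simp
    have e1: "ennreal A * ennreal (cK DIM('a) \<gamma> * \<rho> powr (real DIM('a) + \<gamma>)) = ennreal (A * cK DIM('a) \<gamma> * \<rho> powr (real DIM('a) + \<gamma>))"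
      using ennreal_mult[OF A X] by (simp only: mult.assoc)
    have e2: "ennreal (\<rho> powr \<gamma>) * ennreal m = ennreal (m * \<rho> powr \<gamma>)"
      using ennreal_mult[OF m powr_ge_zero[of \<rho> \<gamma>]] by (simp only: mult.commute)
    have e3: "ennreal (A * cK DIM('a) \<gamma> * \<rho> powr (real DIM('a) + \<gamma>)) + ennreal (m * \<rho> powr \<gamma>) = ennreal (A * cK DIM('a) \<gamma> * \<rho> powr (real DIM('a) + \<gamma>) + m * \<rho> powr \<gamma>)"
      by (rule ennreal_plus[symmetric]) (use A X m in \<open>simp_all add: mult.assoc\<close>)
    show ?thesis using e1 e2 e3 by simp
  qed
  finally show ?thesis .
qed

lemma opt_value:
  fixes m A c \<gamma> :: real and d :: nat
  assumes "m > 0" "A > 0" "d > 0"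
  shows "A * c * ((m/A) powr (1/d)) powr (real d + \<gamma>) + m * ((m/A) powr (1/d)) powr \<gamma>
       = (c + 1) * m * (m/A) powr (\<gamma>/d)"
proof -
  have pos: "m/A > 0" using assms by simp
  have "((m/A) powr (1/d)) powr (real d + \<gamma>) = (m/A) powr (1 + \<gamma>/d)"
    using assms by (simp add: powr_powr field_simps)
  also have "\<dots> = (m/A) * (m/A) powr (\<gamma>/d)" using pos assms(1,2) by (simp add: powr_add)
  finally have e1: "((m/A) powr (1/d)) powr (real d + \<gamma>) = (m/A) * (m/A) powr (\<gamma>/d)" .
  have e2: "((m/A) powr (1/d)) powr \<gamma> = (m/A) powr (\<gamma>/d)" by (simp add: powr_powr)
  show ?thesis unfolding e1 e2 using assms by (simp add: field_simps)
qed

lemma opt_est: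
  fixes v :: "'a::euclidean_space" and h :: "'a \<Rightarrow> real"
  assumes g: "\<gamma> < 0" "real DIM('a) + \<gamma> > 0" and A: "A > 0" and m: "m > 0"
    and hm: "h \<in> borel_measurable lborel" and h0: "\<And>w. 0 \<le> h w"
    and hint: "(\<integral>\<^sup>+w. ennreal (h w) \<partial>lborel) \<le> ennreal m"
    and hA: "\<And>w. w \<in> cball v ((m/A) powr (1/DIM('a))) \<Longrightarrow> h w \<le> A"
  shows "(\<integral>\<^sup>+w. ennreal (h w * norm (v - w) powr \<gamma>) \<partial>lborel)
     \<le> ennreal ((cK DIM('a) \<gamma> + 1) * m * (m/A) powr (\<gamma>/DIM('a)))"
proof -
  have r: "(m/A) powr (1/DIM('a)) > 0" using A m by simp
  from local_est[OF g r _ _ hm h0 hint hA] A m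
  have "(\<integral>\<^sup>+w. ennreal (h w * norm (v - w) powr \<gamma>) \<partial>lborel)
     \<le> ennreal (A * cK DIM('a) \<gamma> * ((m/A) powr (1/DIM('a))) powr (real DIM('a) + \<gamma>) + m * ((m/A) powr (1/DIM('a))) powr \<gamma>)"
    by simp
  also have "\<dots> = ennreal ((cK DIM('a) \<gamma> + 1) * m * (m/A) powr (\<gamma>/DIM('a)))"
    using opt_value[OF m A, of "DIM('a)" "cK DIM('a) \<gamma>" \<gamma>] by simp
  finally show ?thesis .
qed

lemma tail_int:
  "(\<integral>\<^sup>+w. ennreal (inverse ((1 + norm (w::'a::euclidean_space))^(DIM('a)+1))) \<partial>lborel)
     \<le> ennreal (2^(DIM('a)+1) * unit_ball_vol (real DIM('a)))"
proof -
  let ?d = "DIM('a)"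
  let ?w = "unit_ball_vol (real DIM('a))"
  define F where "F k w = ennreal (inverse ((2^k)^(?d+1))) * indicator (cball 0 (2^(k+1))) w" for k :: nat and w :: 'a
  have pw: "ennreal (inverse ((1 + norm w)^(?d+1))) \<le> (\<Sum>k. F k w)" for w
  proof -
    obtain k :: nat where k: "2^k \<le> 1 + norm w" "1 + norm w < 2^(k+1)"
      using real_dyadic[of "1 + norm w"] by auto
    have "inverse ((1 + norm w)^(?d+1)) \<le> inverse (((2::real)^k)^(?d+1))"
      by (intro le_imp_inverse_le power_mono k(1)) auto
    moreover have "w \<in> cball 0 (2^(k+1))" using k(2) by simp
    ultimately have "ennreal (inverse ((1 + norm w)^(?d+1))) \<le> F k w"
      by (simp add: F_def ennreal_leI)
    also have "\<dots> \<le> (\<Sum>k. F k w)" by (rule ennreal_le_suminf)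
    finally show ?thesis .
  qed
  have meas: "F k \<in> borel_measurable lborel" for k unfolding F_def
    by (intro borel_measurable_times_ennreal borel_measurable_const borel_measurable_indicator) simp
  define c0 where "c0 = 2^?d * ?w"
  have c0: "c0 \<ge> 0" unfolding c0_def by simp
  have tm: "inverse (((2::real)^k)^(?d+1)) * (?w * (2^(k+1))^?d) = c0 * (1/2)^k" for k
  proof -
    have "((2::real)^(k+1))^?d = 2^?d * (2^k)^?d" by (simp add: power_mult_distrib)
    moreover have "((2::real)^k)^(?d+1) = (2^k)^?d * 2^k" by simp
    ultimately show ?thesis unfolding c0_def by (simp add: field_simps power_one_over)
  qed
  have intF: "integral\<^sup>N lborel (F k) = ennreal (c0 * (1/2)^k)" for k
  proof -
    have "integral\<^sup>N lborel (F k) = ennreal (inverse (((2::real)^k)^(?d+1))) * emeasure lborel (cball (0::'a) (2^(k+1)))"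
      unfolding F_def by (subst nn_integral_cmult_indicator) auto
    also have "\<dots> = ennreal (inverse (((2::real)^k)^(?d+1)) * (?w * (2^(k+1))^?d))"
      by (subst emeasure_cball) (auto simp: ennreal_mult)
    also have "\<dots> = ennreal (c0 * (1/2)^k)" using tm by simp
    finally show ?thesis .
  qed
  have "(\<integral>\<^sup>+w. ennreal (inverse ((1 + norm (w::'a))^(?d+1))) \<partial>lborel) \<le> (\<integral>\<^sup>+w. (\<Sum>k. F k w) \<partial>lborel)"
    by (rule nn_integral_mono) (use pw in auto)
  also have "\<dots> = (\<Sum>k. integral\<^sup>N lborel (F k))" by (rule nn_integral_suminf) (use meas in auto)
  also have "\<dots> = (\<Sum>k. ennreal (c0 * (1/2)^k))" using intF by simp
  also have "\<dots> = ennreal (\<Sum>k. c0 * (1/2)^k)"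
    by (rule suminf_ennreal2) (use c0 in \<open>auto intro!: summable_mult summable_geometric\<close>)
  also have "(\<Sum>k. c0 * (1/2::real)^k) = 2^(?d+1) * ?w"
  proof -
    have sg: "summable (\<lambda>k. (1/2::real)^k)" by (intro summable_geometric) simp
    have "(\<Sum>k. c0 * (1/2::real)^k) = c0 * (\<Sum>k. (1/2)^k)" using sg by (rule suminf_mult)
    also have "(\<Sum>k. (1/2::real)^k) = 2" using suminf_geometric[of "1/2::real"] by simp
    finally show ?thesis unfolding c0_def by simp
  qed
  finally show ?thesis .
qed

lemma xlnx_sqrt:
  fixes x :: real assumes "0 < x"
  shows "-(x * ln x) \<le> 2 * sqrt x"
proof -
  define s where "s = sqrt x"
  have s0: "s > 0" using assms unfolding s_def by simp
  have s1: "x = s * s" using assms unfolding s_def by simp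
  note s = s0 s1
  have "ln (1/s) \<le> 1/s - 1" using s by (intro ln_le_minus_one) simp
  hence l: "- ln s \<le> 1/s" using s by (simp add: ln_div)
  have "ln x = 2 * ln s" using s by (simp add: ln_mult)
  hence "-(x * ln x) = 2 * (s * s) * (- ln s)" using s by simp
  also have "\<dots> \<le> 2 * (s * s) * (1/s)" using l s by (intro mult_left_mono) auto
  also have "\<dots> = 2 * s" using s by simp
  finally show ?thesis unfolding s_def .
qed

lemma neg_bound:
  fixes x r :: real and d :: nat
  assumes x: "0 \<le> x" and r: "0 \<le> r"
  shows "max (-(x * ln x)) 0 \<le> 2 * (real d + 1) * (x + x * r^2) + 2 * inverse ((1 + r)^(d+1))"
proof -
  have R0: "0 \<le> 2 * (real d + 1) * (x + x * r^2) + 2 * inverse ((1 + r)^(d+1))"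
    using x r by simp
  show ?thesis
  proof (cases "x = 0 \<or> 1 \<le> x")
    case True
    hence "-(x * ln x) \<le> 0" using x by auto
    then show ?thesis using R0 by simp
  next
    case False
    hence x0: "0 < x" using x by auto
    define Y where "Y = (1 + r)^(2*(d+1))"
    have Y: "Y > 0" unfolding Y_def using r by simp
    show ?thesis
    proof (cases "inverse Y \<le> x")
      case True
      have "ln (inverse Y) \<le> ln x" using True Y x0 by (subst ln_le_cancel_iff) auto
      hence "- ln x \<le> ln Y" using Y by (simp add: ln_inverse)
      also have "ln Y = 2 * (real d + 1) * ln (1 + r)" unfolding Y_def using r
        by (subst ln_realpow) (use r in auto)
      also have "\<dots> \<le> 2 * (real d + 1) * (1 + r^2)"
      proof -
        have "ln (1 + r) \<le> r" using r by (rule ln_add_one_self_le_self)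
        also have "r \<le> 1 + r^2"
        proof -
          have "(r-1/2)^2 = r^2 - r + 1/4" by (simp add: power2_eq_square algebra_simps)
          moreover have "0 \<le> (r-1/2)^2" by simp
          ultimately show ?thesis by linarith
        qed
        finally show ?thesis by (intro mult_left_mono) auto
      qed
      finally have "x * (- ln x) \<le> x * (2 * (real d + 1) * (1 + r^2))" using x by (intro mult_left_mono) auto
      hence "-(x * ln x) \<le> 2 * (real d + 1) * (x + x * r^2)" by (simp add: algebra_simps)
      moreover have "0 \<le> 2 * inverse ((1 + r)^(d+1))" using r by simp
      ultimately show ?thesis unfolding max.bounded_iff using R0 by linarith
    next
      case False
      have "sqrt x \<le> sqrt (inverse Y)" using False by simp
      also have "sqrt (inverse Y) = inverse ((1 + r)^(d+1))"
      proof -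
        have "Y = ((1 + r)^(d+1))^2" unfolding Y_def power_mult[symmetric] by (simp only: mult.commute)
        then show ?thesis using r by (simp add: real_sqrt_inverse)
      qed
      finally have "2 * sqrt x \<le> 2 * inverse ((1 + r)^(d+1))" by simp
      hence "-(x * ln x) \<le> 2 * inverse ((1 + r)^(d+1))" using xlnx_sqrt[OF x0] by linarith
      moreover have "0 \<le> 2 * (real d + 1) * (x + x * r^2)" using x by simp
      ultimately show ?thesis using R0 by linarith
    qed
  qed
qed

definition Hc :: "nat \<Rightarrow> real \<Rightarrow> real \<Rightarrow> real \<Rightarrow> real" where
  "Hc d H0 M0 E0 = H0 + 2*(real d+1)*(M0+E0) + 2 * (2^(d+1) * unit_ball_vol (real d))"

lemma entropy_tail:
  fixes f :: "real^'n \<Rightarrow> real"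
  assumes hb: "hydro_bounds m0 M0 E0 H0 f" and K: "K > 1"
  shows "(\<integral>\<^sup>+w. ennreal (if f w > K then f w else 0) \<partial>lborel) \<le> ennreal (Hc DIM(real^'n) H0 M0 E0 / ln K)"
proof -
  let ?d = "DIM(real^'n)"
  let ?w = "unit_ball_vol (real ?d)"
  have fm: "f \<in> borel_measurable lborel" and f0: "\<And>v. 0 \<le> f v" and fi: "integrable lborel f"
    and f2: "integrable lborel (\<lambda>v. f v * norm v ^ 2)" and fl: "integrable lborel (\<lambda>v. f v * ln (f v))"
    and M: "(LINT v|lborel. f v) \<le> M0" and E: "(LINT v|lborel. f v * norm v ^ 2) \<le> E0"
    and H: "(LINT v|lborel. f v * ln (f v)) \<le> H0"
    using hb unfolding hydro_bounds_def by auto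
  define L where "L v = f v * ln (f v)" for v
  define P where "P v = max (L v) 0" for v
  define N where "N v = max (- L v) 0" for v
  define tl where "tl v = inverse ((1 + norm v)^(?d+1))" for v :: "real^'n"
  have Li: "integrable lborel L" using fl unfolding L_def .
  have Pi: "integrable lborel P" unfolding P_def by (intro integrable_max Li) simp
  have Ni: "integrable lborel N" unfolding N_def by (intro integrable_max integrable_minus Li) simp
  have tm: "tl \<in> borel_measurable lborel" unfolding tl_def by measurable
  have tn: "(\<integral>\<^sup>+w. ennreal (tl w) \<partial>lborel) \<le> ennreal (2^(?d+1) * ?w)"
    unfolding tl_def by (rule tail_int)
  have ti: "integrable lborel tl"
  proof (rule integrableI_bounded[OF tm])
    have "(\<integral>\<^sup>+w. ennreal (norm (tl w)) \<partial>lborel) = (\<integral>\<^sup>+w. ennreal (tl w) \<partial>lborel)"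
      unfolding tl_def by simp
    also have "\<dots> < \<infinity>" using tn by (simp add: le_less_trans)
    finally show "(\<integral>\<^sup>+w. ennreal (norm (tl w)) \<partial>lborel) < \<infinity>" .
  qed
  have tI: "integral\<^sup>L lborel tl \<le> 2^(?d+1) * ?w"
    by (rule nn_to_lint[OF tm _ tn]) (auto simp: tl_def)
  define T where "T v = 2 * (real ?d + 1) * (f v + f v * norm v ^ 2) + 2 * tl v" for v
  have Ti: "integrable lborel T" unfolding T_def
    using fi f2 ti by auto
  have NT: "N v \<le> T v" for v
    unfolding N_def L_def T_def tl_def using neg_bound[OF f0[of v] norm_ge_zero[of v], of ?d] by simp
  have "integral\<^sup>L lborel N \<le> integral\<^sup>L lborel T" by (rule integral_mono[OF Ni Ti NT])
  also have "integral\<^sup>L lborel T = 2 * (real ?d + 1) * ((LINT v|lborel. f v) + (LINT v|lborel. f v * norm v ^ 2)) + 2 * integral\<^sup>L lborel tl"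
    unfolding T_def using fi f2 ti by (simp add: integral_add integral_mult_right)
  also have "\<dots> \<le> 2 * (real ?d + 1) * (M0 + E0) + 2 * (2^(?d+1) * ?w)"
    using M E tI by (intro add_mono mult_left_mono) auto
  finally have NI: "integral\<^sup>L lborel N \<le> 2 * (real ?d + 1) * (M0 + E0) + 2 * (2^(?d+1) * ?w)" .
  have "P = (\<lambda>v. L v + N v)" unfolding P_def N_def by (rule ext) auto
  hence "integral\<^sup>L lborel P = integral\<^sup>L lborel L + integral\<^sup>L lborel N"
    using Bochner_Integration.integral_add[OF Li Ni] by simp
  hence PI: "integral\<^sup>L lborel P \<le> Hc ?d H0 M0 E0" using NI H unfolding Hc_def L_def by linarith
  have lK: "ln K > 0" using K by simp
  have pw: "ennreal (if f w > K then f w else 0) \<le> ennreal (P w / ln K)" for w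
  proof (cases "f w > K")
    case True
    have "ln K \<le> ln (f w)" using True K by simp
    hence "f w * ln K \<le> f w * ln (f w)" using f0[of w] by (intro mult_left_mono) auto
    hence "f w \<le> L w / ln K" using lK unfolding L_def by (simp add: pos_le_divide_eq)
    also have "\<dots> \<le> P w / ln K" using lK unfolding P_def by (intro divide_right_mono) auto
    finally show ?thesis using True by (simp add: ennreal_leI)
  qed (simp)
  have "(\<integral>\<^sup>+w. ennreal (if f w > K then f w else 0) \<partial>lborel) \<le> (\<integral>\<^sup>+w. ennreal (P w / ln K) \<partial>lborel)"
    by (rule nn_integral_mono) (use pw in auto)
  also have "\<dots> = ennreal (integral\<^sup>L lborel (\<lambda>w. P w / ln K))"
  proof (rule nn_integral_eq_integral)
    show "integrable lborel (\<lambda>w. P w / ln K)" using Pi by simp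
    show "AE x in lborel. 0 \<le> P x / ln K" using lK by (auto simp: P_def)
  qed
  also have "integral\<^sup>L lborel (\<lambda>w. P w / ln K) = integral\<^sup>L lborel P / ln K" by simp
  also have "ennreal (\<dots>) \<le> ennreal (Hc ?d H0 M0 E0 / ln K)"
    using PI lK by (intro ennreal_leI divide_right_mono) auto
  finally show ?thesis .
qed

lemma set_int_bound:
  fixes H u :: "real \<Rightarrow> real"
  assumes S: "S \<in> sets lborel" and H0: "\<And>x. x \<in> S \<Longrightarrow> 0 \<le> H x"
    and u: "\<And>x. x \<in> S \<Longrightarrow> c0 \<le> u x \<and> u x \<le> c1" and c: "c0 > 0" "c0 \<le> c1"
    and um: "u \<in> borel_measurable borel"
  shows "\<bar>set_lebesgue_integral lborel S (\<lambda>x. H x * u x)\<bar> \<le> c1 * \<bar>set_lebesgue_integral lborel S H\<bar>"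
proof -
  define G where "G x = indicator S x *\<^sub>R (H x * u x)" for x
  define I where "I x = indicator S x *\<^sub>R H x" for x
  show ?thesis
  proof (cases "integrable lborel G")
    case False
    hence "set_lebesgue_integral lborel S (\<lambda>x. H x * u x) = 0"
      unfolding set_lebesgue_integral_def G_def by (simp add: not_integrable_integral_eq)
    then show ?thesis using c by simp
  next
    case True
    have Gm: "G \<in> borel_measurable lborel" using True by (rule borel_measurable_integrable)
    have IG: "I = (\<lambda>x. G x * inverse (u x))"
    proof (rule ext)
      fix x show "I x = G x * inverse (u x)"
        using u[of x] c by (cases "x \<in> S") (auto simp: I_def G_def indicator_def)
    qed
    have Im: "I \<in> borel_measurable lborel" unfolding IG
      by (intro borel_measurable_times Gm measurable_compose[OF _ borel_measurable_inverse]) (use um in auto)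
    have Ib: "norm (I x) \<le> norm (G x / c0)" for x
    proof (cases "x \<in> S")
      case True
      have "H x * c0 \<le> H x * u x" using u[OF True] H0[OF True] by (intro mult_left_mono) auto
      then show ?thesis using True H0[OF True] c u[OF True]
        by (simp add: I_def G_def abs_mult pos_le_divide_eq)
    qed (simp add: I_def G_def)
    have Ii: "integrable lborel I"
      by (rule Bochner_Integration.integrable_bound[of _ "\<lambda>x. G x / c0"]) (use True Im Ib in auto)
    have GI: "G x \<le> c1 * I x" for x
    proof (cases "x \<in> S")
      case True
      then show ?thesis using mult_right_mono[of "u x" c1 "H x"] u[OF True] H0[OF True]
        unfolding G_def I_def by (simp add: mult.commute)
    qed (simp add: G_def I_def)
    have G0: "0 \<le> G x" for x
      using u[of x] H0[of x] c unfolding G_def indicator_def by auto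
    have I0: "0 \<le> I x" for x using H0[of x] unfolding I_def indicator_def by auto
    have "integral\<^sup>L lborel G \<le> integral\<^sup>L lborel (\<lambda>x. c1 * I x)"
      by (rule integral_mono) (use True Ii GI in auto)
    also have "\<dots> = c1 * integral\<^sup>L lborel I" by simp
    finally have "integral\<^sup>L lborel G \<le> c1 * integral\<^sup>L lborel I" .
    moreover have "0 \<le> integral\<^sup>L lborel G" using G0 by simp
    moreover have "0 \<le> integral\<^sup>L lborel I" using I0 by simp
    ultimately show ?thesis unfolding set_lebesgue_integral_def G_def[symmetric] I_def[symmetric] by simp
  qed
qed

definition Hf :: "nat \<Rightarrow> real \<Rightarrow> real \<Rightarrow> real \<Rightarrow> real" where
 "Hf d \<gamma> s \<theta> = sin \<theta> ^ (d - 2) * (cos (\<theta>/2) powr (- real d - \<gamma>) - 1) *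
    (sin (\<theta>/2) powr (\<gamma> - (real d - 2)) * tan (\<theta>/2) powr (- (\<gamma> + 2 * s + 1)))"

lemma CS_bound:
  assumes d: "d \<ge> 2" and g: "\<gamma> > -2" and b: "bt0 > 0" "bt0 \<le> bt1" and sm: "smooth_near_interval bt"
    and bb: "\<forall>x\<in>{-1..1}. bt0 \<le> bt x \<and> bt x \<le> bt1"
  shows "\<bar>C_S d \<gamma> s bt\<bar> \<le> \<bar>sphere_area (d - 1)\<bar> *
           (bt1 * \<bar>set_lebesgue_integral lborel {0<..<pi/2} (Hf d \<gamma> s)\<bar>)"
proof -
  let ?S = "{0<..<pi/2::real}"
  have ei: "einterval 0 (ereal (pi/2)) = ?S" by (metis einterval_eq zero_ereal_def)
  have eq: "C_S d \<gamma> s bt = sphere_area (d-1) * set_lebesgue_integral lborel ?S (\<lambda>\<theta>. Hf d \<gamma> s \<theta> * bt (cos \<theta>))"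
    unfolding C_S_def b_ang_def Hf_def by (subst interval_lebesgue_integral_le_eq) (auto simp: mult_ac ei)
  obtain U where U: "open U" "{-1..1} \<subseteq> U" "\<forall>k. ((deriv ^^ k) bt) differentiable_on U"
    using sm unfolding smooth_near_interval_def by blast
  have "bt differentiable_on U" using U(3)[rule_format, of 0] by simp
  hence cU: "continuous_on U bt" by (rule differentiable_imp_continuous_on)
  have "continuous_on UNIV (\<lambda>\<theta>. bt (cos \<theta>))"
    by (rule continuous_on_compose2[OF cU]) (use U(2) in \<open>auto intro!: continuous_intros\<close>)
  hence um: "(\<lambda>\<theta>. bt (cos \<theta>)) \<in> borel_measurable borel" by (rule borel_measurable_continuous_onI)
  have Sx: "0 < x \<and> x < pi/2" if "x \<in> ?S" for x using that by simp
  have Hn: "0 \<le> Hf d \<gamma> s x" if "x \<in> ?S" for x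
  proof -
    have x: "0 < x" "x < pi/2" using Sx[OF that] by auto
    have "0 \<le> sin x" using x by (intro sin_ge_zero) auto
    moreover have "1 \<le> cos (x/2) powr (- real d - \<gamma>)"
    proof -
      have c0: "0 < cos (x/2)" using x by (intro cos_gt_zero) auto
      have "1 powr (- real d - \<gamma>) \<le> cos (x/2) powr (- real d - \<gamma>)"
        by (rule powr_mono2') (use d g c0 in auto)
      then show ?thesis by simp
    qed
    ultimately show ?thesis unfolding Hf_def by simp
  qed
  have ub: "bt0 \<le> bt (cos x) \<and> bt (cos x) \<le> bt1" for x using bb by auto
  have "\<bar>set_lebesgue_integral lborel ?S (\<lambda>\<theta>. Hf d \<gamma> s \<theta> * bt (cos \<theta>))\<bar> \<le> bt1 * \<bar>set_lebesgue_integral lborel ?S (Hf d \<gamma> s)\<bar>"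
    by (rule set_int_bound[OF _ Hn ub b um]) auto
  then show ?thesis unfolding eq abs_mult by (intro mult_left_mono) auto
qed

lemma gfun_le_N: "N > 0 \<Longrightarrow> gfun N q w \<le> N"
  unfolding gfun_def by (auto simp: min_def)

lemma gfun_pos: "N > 0 \<Longrightarrow> gfun N q w > 0"
  unfolding gfun_def by (auto simp: min_def)

lemma gfun_small: assumes "norm v \<le> 1" "q \<ge> 0" shows "gfun N q v = N"
proof (cases "v = 0")
  case False
  hence "0 < norm v" by simp
  hence "1 powr (-q) \<le> norm v powr (-q)" using assms by (intro powr_mono2') auto
  then show ?thesis unfolding gfun_def using False by (simp add: min_def)
qed (simp add: gfun_def)

lemma gfun_large: assumes "norm v \<ge> 1" "q \<ge> 0" shows "gfun N q v = N * norm v powr (-q)"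
proof -
  have v: "v \<noteq> 0" using assms(1) by (metis norm_zero not_one_le_zero)
  have "norm v powr (-q) \<le> 1 powr (-q)" using assms by (intro powr_mono2') auto
  then show ?thesis unfolding gfun_def using v by (simp add: min_def)
qed

lemma gfun_q0: "gfun N 0 w = N"
  unfolding gfun_def by simp

lemma gfun_near:
  assumes v: "norm v \<ge> 1" and w: "w \<in> cball v (norm v / 2)" and q: "q \<ge> 0" and N: "N > 0"
  shows "gfun N q w \<le> 2 powr q * gfun N q v"
proof -
  have "norm v - norm w \<le> norm (v - w)" by (rule norm_triangle_ineq2)
  also have "norm (v - w) \<le> norm v / 2" using w by (simp add: dist_norm)
  finally have nw: "norm v / 2 \<le> norm w" by simp
  have nv: "0 < norm v / 2" using v by linarith
  hence w0: "w \<noteq> 0" using nw by auto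
  have "gfun N q w \<le> N * norm w powr (-q)" unfolding gfun_def using w0 N by (simp add: min_def)
  also have "norm w powr (-q) \<le> (norm v / 2) powr (-q)" using nw nv q by (intro powr_mono2') auto
  hence "N * norm w powr (-q) \<le> N * (norm v / 2) powr (-q)" using N by simp
  also have "(norm v / 2) powr (-q) = 2 powr q * norm v powr (-q)"
  proof -
    have "(norm v / 2) powr (-q) = norm v powr (-q) / 2 powr (-q)" by (rule powr_divide)
    also have "2 powr (-q) = inverse (2 powr q)" by (rule powr_minus)
    finally show ?thesis by (simp only: divide_inverse inverse_inverse_eq mult.commute)
  qed
  finally have "gfun N q w \<le> N * (2 powr q * norm v powr (-q))" .
  also have "\<dots> = 2 powr q * (N * norm v powr (-q))" by (simp only: mult.left_commute)
  also have "\<dots> = 2 powr q * gfun N q v" using gfun_large[OF v q, of N] by simp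
  finally show ?thesis .
qed

lemma pw_alg:
  fixes m A e :: real assumes "m > 0" "A > 0"
  shows "m * (m/A) powr e = m powr (1 + e) * A powr (-e)"
proof -
  have "(m/A) powr e = m powr e / A powr e" using assms by (simp add: powr_divide)
  moreover have "m * m powr e = m powr (1 + e)" using assms by (simp add: powr_add)
  moreover have "1 / A powr e = A powr (-e)" by (simp add: powr_minus divide_inverse)
  ultimately show ?thesis by (metis times_divide_eq_right mult.assoc divide_inverse mult_1)
qed

lemma rho_pow:
  fixes x \<gamma> :: real assumes "x \<ge> 1" "\<gamma> \<le> 0"
  shows "(x/2) powr \<gamma> \<le> 4 powr (-\<gamma>) * (1+x) powr \<gamma>"
proof -
  have "(x/2) powr \<gamma> \<le> ((1+x)/4) powr \<gamma>" using assms by (intro powr_mono2') auto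
  also have "((1+x)/4) powr \<gamma> = (1+x) powr \<gamma> / 4 powr \<gamma>" by (intro powr_divide)
  also have "\<dots> = 4 powr (-\<gamma>) * (1+x) powr \<gamma>" by (simp add: powr_minus divide_inverse mult.commute)
  finally show ?thesis .
qed

lemma Fm: "(h::'a::euclidean_space\<Rightarrow>real) \<in> borel_measurable lborel \<Longrightarrow> (\<lambda>w. h w * norm (v - w) powr \<gamma>) \<in> borel_measurable lborel"
  by (intro borel_measurable_times pm) auto

lemma partB:
  fixes f :: "real^'n \<Rightarrow> real" and v :: "real^'n"
  assumes g: "\<gamma> < 0" "real CARD('n) + \<gamma> > 0"
    and fm: "f \<in> borel_measurable lborel" and f0: "\<And>w. 0 \<le> f w"
    and nnf: "(\<integral>\<^sup>+w. ennreal (f w) \<partial>lborel) \<le> ennreal M0" and M0: "M0 > 0"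
    and q: "q \<ge> 0" and N: "N > 0" and fle: "\<And>w. f w \<le> gfun N q w"
  shows "(LINT w|lborel. f w * norm (v - w) powr \<gamma>) \<le>
     ((cK CARD('n) \<gamma> + 1) * (M0 powr (1 + \<gamma>/CARD('n)) + M0 * 4 powr (-\<gamma>))) *
       (2 powr (- q * \<gamma> / CARD('n)) * gfun N q v powr (- \<gamma> / CARD('n)) + (1 + norm v) powr \<gamma>)"
proof -
  let ?d = "real CARD('n)"
  let ?c = "cK CARD('n) \<gamma> + 1"
  let ?g = "gfun N q v"
  let ?R = "(?c * (M0 powr (1 + \<gamma>/?d) + M0 * 4 powr (-\<gamma>))) *
       (2 powr (- q * \<gamma> / ?d) * ?g powr (- \<gamma> / ?d) + (1 + norm v) powr \<gamma>)"
  have gd: "\<gamma> < 0" "real DIM(real^'n) + \<gamma> > 0" using g by auto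
  have c: "?c > 0" using cK_pos[OF g(2)] by simp
  have gp: "?g > 0" using gfun_pos[OF N] .
  have d0: "?d > 0" by simp
  have R0: "0 \<le> ?R" using c M0 cK_pos[OF g(2)] by (intro mult_nonneg_nonneg add_nonneg_nonneg) auto
  have e2: "1 \<le> 2 powr (- q * \<gamma> / ?d)" using q g by (intro ge_one_powr_ge_zero) (auto intro!: divide_nonpos_pos mult_nonneg_nonpos)
  have T1: "?c * M0 powr (1 + \<gamma>/?d) * (2 powr (- q * \<gamma> / ?d) * ?g powr (- \<gamma> / ?d)) \<le> ?R"
  proof -
    have "?c * M0 powr (1 + \<gamma>/?d) \<le> ?c * (M0 powr (1 + \<gamma>/?d) + M0 * 4 powr (-\<gamma>))"
      using c M0 by (intro mult_left_mono) auto
    hence "?c * M0 powr (1 + \<gamma>/?d) * (2 powr (- q * \<gamma> / ?d) * ?g powr (- \<gamma> / ?d))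
       \<le> ?c * (M0 powr (1 + \<gamma>/?d) + M0 * 4 powr (-\<gamma>)) * (2 powr (- q * \<gamma> / ?d) * ?g powr (- \<gamma> / ?d))"
      by (intro mult_right_mono) auto
    also have "\<dots> \<le> ?R" using c M0 by (intro mult_left_mono) auto
    finally show ?thesis .
  qed
  have T2: "?c * M0 * (4 powr (-\<gamma>) * (1 + norm v) powr \<gamma>) \<le> ?R"
  proof -
    have "?c * M0 * 4 powr (-\<gamma>) \<le> ?c * (M0 powr (1 + \<gamma>/?d) + M0 * 4 powr (-\<gamma>))"
      using c M0 by (simp add: mult.assoc mult_left_mono)
    hence "?c * M0 * 4 powr (-\<gamma>) * (1 + norm v) powr \<gamma>
       \<le> ?c * (M0 powr (1 + \<gamma>/?d) + M0 * 4 powr (-\<gamma>)) * (1 + norm v) powr \<gamma>"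
      by (intro mult_right_mono) auto
    also have "\<dots> \<le> ?R" using c M0 by (intro mult_left_mono) auto
    finally show ?thesis by (simp add: mult.assoc)
  qed
  have main: "(\<integral>\<^sup>+w. ennreal (f w * norm (v - w) powr \<gamma>) \<partial>lborel) \<le> ennreal ?R"
  proof (cases "norm v \<le> 1")
    case True
    have gN: "?g = N" using gfun_small[OF True q] .
    have "(\<integral>\<^sup>+w. ennreal (f w * norm (v - w) powr \<gamma>) \<partial>lborel) \<le> ennreal (?c * M0 * (M0/N) powr (\<gamma>/?d))"
    proof -
      have hA: "f w \<le> N" for w using fle[of w] gfun_le_N[OF N, of q w] by linarith
      have dd: "DIM(real^'n) = CARD('n)" by simp
      show ?thesis using opt_est[OF gd N M0 fm f0 nnf hA, of v] unfolding dd .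
    qed
    also have "?c * M0 * (M0/N) powr (\<gamma>/?d) = ?c * (M0 powr (1 + \<gamma>/?d) * N powr (-(\<gamma>/?d)))"
      using pw_alg[OF M0 N] by (simp add: mult.assoc)
    also have "\<dots> \<le> ?c * M0 powr (1 + \<gamma>/?d) * (2 powr (- q * \<gamma> / ?d) * ?g powr (- \<gamma> / ?d))"
    proof -
      have "N powr (-(\<gamma>/?d)) \<le> 2 powr (- q * \<gamma> / ?d) * N powr (-(\<gamma>/?d))"
        using mult_right_mono[OF e2, of "N powr (-(\<gamma>/?d))"] by simp
      hence "M0 powr (1 + \<gamma>/?d) * N powr (-(\<gamma>/?d)) \<le> M0 powr (1 + \<gamma>/?d) * (2 powr (- q * \<gamma> / ?d) * N powr (-(\<gamma>/?d)))"
        by (rule mult_left_mono) simp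
      hence "?c * (M0 powr (1 + \<gamma>/?d) * N powr (-(\<gamma>/?d))) \<le> ?c * (M0 powr (1 + \<gamma>/?d) * (2 powr (- q * \<gamma> / ?d) * N powr (-(\<gamma>/?d))))"
        by (rule mult_left_mono) (use c in simp)
      then show ?thesis unfolding gN by (simp add: mult.assoc)
    qed
    finally show ?thesis using T1 by (simp add: ennreal_leI order_trans)
  next
    case False
    hence v1: "norm v \<ge> 1" by simp
    define A where "A = 2 powr q * ?g"
    have A: "A > 0" unfolding A_def using gp by simp
    have near: "f w \<le> A" if "w \<in> cball v (norm v / 2)" for w
      using fle[of w] gfun_near[OF v1 that q N] unfolding A_def by linarith
    define \<rho>0 where "\<rho>0 = (M0/A) powr (1/?d)"
    have r0: "\<rho>0 > 0" unfolding \<rho>0_def using A M0 by simp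
    show ?thesis
    proof (cases "\<rho>0 \<le> norm v / 2")
      case True
      have "(\<integral>\<^sup>+w. ennreal (f w * norm (v - w) powr \<gamma>) \<partial>lborel) \<le> ennreal (?c * M0 * (M0/A) powr (\<gamma>/?d))"
      proof -
        have dd: "DIM(real^'n) = CARD('n)" by simp
        have hA: "f w \<le> A" if "w \<in> cball v ((M0/A) powr (1/DIM(real^'n)))" for w
          using that True near[of w] unfolding dd \<rho>0_def by auto
        show ?thesis using opt_est[OF gd A M0 fm f0 nnf hA] unfolding dd .
      qed
      also have "?c * M0 * (M0/A) powr (\<gamma>/?d) = ?c * (M0 powr (1 + \<gamma>/?d) * A powr (-(\<gamma>/?d)))"
        using pw_alg[OF M0 A] by (simp add: mult.assoc)
      also have "A powr (-(\<gamma>/?d)) = 2 powr (- q * \<gamma> / ?d) * ?g powr (- \<gamma> / ?d)"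
        unfolding A_def using gp by (simp add: powr_mult powr_powr)
      finally show ?thesis using T1 by (simp add: ennreal_leI order_trans mult.assoc)
    next
      case False
      let ?r = "norm v / 2"
      have r: "?r > 0" using v1 by linarith
      have "(\<integral>\<^sup>+w. ennreal (f w * norm (v - w) powr \<gamma>) \<partial>lborel)
          \<le> ennreal (A * cK DIM(real^'n) \<gamma> * ?r powr (real DIM(real^'n) + \<gamma>) + M0 * ?r powr \<gamma>)"
        by (rule local_est[OF gd r _ _ fm f0 nnf near]) (use A M0 in auto)
      also have "A * cK DIM(real^'n) \<gamma> * ?r powr (real DIM(real^'n) + \<gamma>) + M0 * ?r powr \<gamma> \<le> ?c * M0 * (4 powr (-\<gamma>) * (1 + norm v) powr \<gamma>)"
      proof -
        have "?r powr ?d \<le> \<rho>0 powr ?d" using False r by (intro powr_mono2) auto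
        also have "\<rho>0 powr ?d = M0 / A" unfolding \<rho>0_def using A M0 by (simp add: powr_powr)
        finally have "A * ?r powr ?d \<le> M0" using A by (simp add: pos_le_divide_eq mult.commute)
        hence "A * ?r powr ?d * ?r powr \<gamma> \<le> M0 * ?r powr \<gamma>" by (intro mult_right_mono) auto
        hence "A * ?r powr (?d + \<gamma>) \<le> M0 * ?r powr \<gamma>" using r by (simp add: powr_add mult.assoc)
        hence "A * cK CARD('n) \<gamma> * ?r powr (?d + \<gamma>) \<le> cK CARD('n) \<gamma> * (M0 * ?r powr \<gamma>)"
          using cK_pos[OF g(2)] by (simp add: mult.commute mult.left_commute mult_left_mono)
        hence "A * cK CARD('n) \<gamma> * ?r powr (?d + \<gamma>) + M0 * ?r powr \<gamma> \<le> ?c * M0 * ?r powr \<gamma>"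
          by (simp add: algebra_simps)
        also have "\<dots> \<le> ?c * M0 * (4 powr (-\<gamma>) * (1 + norm v) powr \<gamma>)"
          using rho_pow[OF v1, of \<gamma>] g c M0 by (intro mult_left_mono) auto
        finally show ?thesis by simp
      qed
      finally show ?thesis using T2 by (simp add: ennreal_leI order_trans)
    qed
  qed
  show ?thesis by (rule nn_to_lint[OF Fm[OF fm] _ main R0]) (use f0 in auto)
qed

definition psi :: "real \<Rightarrow> real \<Rightarrow> real \<Rightarrow> real" where
  "psi \<gamma> d r = (if r \<le> exp 2 then 1 else r powr (\<gamma>/(2*d)) + (ln r / 2) powr (-(1+\<gamma>/d)))"

lemma sum_le_prod:
  fixes a b x y z :: real
  assumes "0 \<le> a" "0 \<le> b" "0 \<le> x" "0 \<le> y" "0 \<le> z"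
  shows "a*x*z + b*y*z \<le> (a+b)*(x+y)*z"
proof -
  have "(a+b)*(x+y)*z = a*x*z + b*y*z + (a*y*z + b*x*z)" by algebra
  moreover have "0 \<le> a*y*z + b*x*z" using assms by simp
  ultimately show ?thesis by linarith
qed

lemma partC:
  fixes f :: "real^'n \<Rightarrow> real" and v :: "real^'n"
  assumes g: "\<gamma> < 0" "real CARD('n) + \<gamma> > 0"
    and hb: "hydro_bounds m0 M0 E0 H0 f" and M0: "M0 > 0" and N: "N > 0" and fle: "\<And>w. f w \<le> N"
  shows "(LINT w|lborel. f w * norm (v - w) powr \<gamma>) \<le>
     ((cK CARD('n) \<gamma> + 1) * (M0 powr (1 + \<gamma>/CARD('n)) + (\<bar>Hc CARD('n) H0 M0 E0\<bar> + 1) powr (1 + \<gamma>/CARD('n)))) *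
       (N powr (- \<gamma> / CARD('n)) * psi \<gamma> CARD('n) N)"
proof -
  let ?d = "real CARD('n)"
  let ?c = "cK CARD('n) \<gamma> + 1"
  let ?e = "1 + \<gamma>/?d"
  let ?Hp = "\<bar>Hc CARD('n) H0 M0 E0\<bar> + 1"
  let ?R = "(?c * (M0 powr ?e + ?Hp powr ?e)) * (N powr (- \<gamma> / ?d) * psi \<gamma> ?d N)"
  have dd: "DIM(real^'n) = CARD('n)" by simp
  have gd: "\<gamma> < 0" "real DIM(real^'n) + \<gamma> > 0" using g by auto
  have c: "?c > 0" using cK_pos[OF g(2)] by simp
  have fm: "f \<in> borel_measurable lborel" and f0: "\<And>v. 0 \<le> f v" and fi: "integrable lborel f"
    and M: "(LINT v|lborel. f v) \<le> M0"
    using hb unfolding hydro_bounds_def by auto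
  have nnf: "(\<integral>\<^sup>+w. ennreal (f w) \<partial>lborel) \<le> ennreal M0"
  proof -
    have "(\<integral>\<^sup>+w. ennreal (f w) \<partial>lborel) = ennreal (LINT v|lborel. f v)"
      by (rule nn_integral_eq_integral) (use fi f0 in auto)
    then show ?thesis using M by (simp add: ennreal_leI)
  qed
  have psi0: "psi \<gamma> ?d N > 0" unfolding psi_def using N by (auto intro!: add_pos_nonneg)
  have R0: "0 \<le> ?R" using c psi0 cK_pos[OF g(2)] by (intro mult_nonneg_nonneg add_nonneg_nonneg) auto
  have main: "(\<integral>\<^sup>+w. ennreal (f w * norm (v - w) powr \<gamma>) \<partial>lborel) \<le> ennreal ?R"
  proof (cases "N \<le> exp 2")
    case True
    have "(\<integral>\<^sup>+w. ennreal (f w * norm (v - w) powr \<gamma>) \<partial>lborel) \<le> ennreal (?c * M0 * (M0/N) powr (\<gamma>/?d))"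
      using opt_est[OF gd N M0 fm f0 nnf fle, of v] unfolding dd .
    also have "?c * M0 * (M0/N) powr (\<gamma>/?d) = ?c * (M0 powr ?e * N powr (-(\<gamma>/?d)))"
      using pw_alg[OF M0 N] by (simp add: mult.assoc)
    also have "\<dots> \<le> ?R"
    proof -
      have "M0 powr ?e \<le> M0 powr ?e + ?Hp powr ?e" by simp
      hence "?c * M0 powr ?e \<le> ?c * (M0 powr ?e + ?Hp powr ?e)" using c by (intro mult_left_mono) auto
      hence "?c * M0 powr ?e * N powr (-(\<gamma>/?d)) \<le> ?c * (M0 powr ?e + ?Hp powr ?e) * N powr (-(\<gamma>/?d))"
        by (intro mult_right_mono) auto
      then show ?thesis using True unfolding psi_def by (simp add: mult.assoc)
    qed
    finally show ?thesis by (simp add: ennreal_leI)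
  next
    case False
    define K where "K = sqrt N"
    have e1: "exp 1 < K"
    proof -
      have "sqrt (exp 2) < sqrt N" using False by simp
      moreover have "sqrt (exp 2) = exp (1::real)"
      proof -
        have "exp (1::real) * exp 1 = exp 2" by (simp add: mult_exp_exp)
        hence "sqrt (exp 2) = sqrt ((exp (1::real))^2)" by (simp add: power2_eq_square)
        then show ?thesis by simp
      qed
      ultimately show ?thesis unfolding K_def by simp
    qed
    have K1: "K > 1" using e1 by (meson exp_gt_one less_trans zero_less_one)
    have K0: "K > 0" using K1 by simp
    have lK: "ln K = ln N / 2" unfolding K_def using N by (simp add: ln_sqrt)
    have lK1: "ln K > 1" using e1 K0 by (metis ln_exp ln_less_cancel_iff exp_gt_zero)
    define h1 where "h1 w = (if f w > K then 0 else f w)" for w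
    define h2 where "h2 w = (if f w > K then f w else 0)" for w
    have h1m: "h1 \<in> borel_measurable lborel" unfolding h1_def using fm by measurable
    have h2m: "h2 \<in> borel_measurable lborel" unfolding h2_def using fm by measurable
    have h10: "0 \<le> h1 w" for w using f0[of w] unfolding h1_def by auto
    have h20: "0 \<le> h2 w" for w using f0[of w] unfolding h2_def by auto
    have h1K: "h1 w \<le> K" for w unfolding h1_def using K0 by auto
    have h2N: "h2 w \<le> N" for w using fle[of w] N unfolding h2_def by auto
    have nn1: "(\<integral>\<^sup>+w. ennreal (h1 w) \<partial>lborel) \<le> ennreal M0"
    proof -
      have "(\<integral>\<^sup>+w. ennreal (h1 w) \<partial>lborel) \<le> (\<integral>\<^sup>+w. ennreal (f w) \<partial>lborel)"
        by (rule nn_integral_mono) (use f0 in \<open>auto simp: h1_def ennreal_leI\<close>)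
      then show ?thesis using nnf by simp
    qed
    define m2 where "m2 = ?Hp / ln K"
    have m2: "m2 > 0" unfolding m2_def using lK1 by simp
    have nn2: "(\<integral>\<^sup>+w. ennreal (h2 w) \<partial>lborel) \<le> ennreal m2"
    proof -
      have "(\<integral>\<^sup>+w. ennreal (h2 w) \<partial>lborel) \<le> ennreal (Hc DIM(real^'n) H0 M0 E0 / ln K)"
        unfolding h2_def by (rule entropy_tail[OF hb K1])
      also have "\<dots> \<le> ennreal m2" unfolding m2_def dd using lK1
        by (intro ennreal_leI divide_right_mono) auto
      finally show ?thesis .
    qed
    have b1: "(\<integral>\<^sup>+w. ennreal (h1 w * norm (v - w) powr \<gamma>) \<partial>lborel) \<le> ennreal (?c * M0 * (M0/K) powr (\<gamma>/?d))"
      using opt_est[OF gd K0 M0 h1m h10 nn1 h1K, of v] unfolding dd .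
    have b2: "(\<integral>\<^sup>+w. ennreal (h2 w * norm (v - w) powr \<gamma>) \<partial>lborel) \<le> ennreal (?c * m2 * (m2/N) powr (\<gamma>/?d))"
      using opt_est[OF gd N m2 h2m h20 nn2 h2N, of v] unfolding dd .
    have split: "ennreal (f w * norm (v - w) powr \<gamma>) = ennreal (h1 w * norm (v - w) powr \<gamma>) + ennreal (h2 w * norm (v - w) powr \<gamma>)" for w
      unfolding h1_def h2_def using f0[of w] by auto
    have "(\<integral>\<^sup>+w. ennreal (f w * norm (v - w) powr \<gamma>) \<partial>lborel)
        = (\<integral>\<^sup>+w. ennreal (h1 w * norm (v - w) powr \<gamma>) \<partial>lborel) + (\<integral>\<^sup>+w. ennreal (h2 w * norm (v - w) powr \<gamma>) \<partial>lborel)"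
      unfolding split by (rule nn_integral_add) (use Fm[OF h1m] Fm[OF h2m] in auto)
    also have "\<dots> \<le> ennreal (?c * M0 * (M0/K) powr (\<gamma>/?d)) + ennreal (?c * m2 * (m2/N) powr (\<gamma>/?d))"
      by (rule add_mono[OF b1 b2])
    also have "\<dots> = ennreal (?c * M0 * (M0/K) powr (\<gamma>/?d) + ?c * m2 * (m2/N) powr (\<gamma>/?d))"
      using c M0 m2 by (intro ennreal_plus[symmetric]) auto
    also have "?c * M0 * (M0/K) powr (\<gamma>/?d) + ?c * m2 * (m2/N) powr (\<gamma>/?d) \<le> ?R"
    proof -
      have t1: "M0 * (M0/K) powr (\<gamma>/?d) = M0 powr ?e * (N powr (\<gamma>/(2*?d)) * N powr (- \<gamma> / ?d))"
      proof -
        have "M0 * (M0/K) powr (\<gamma>/?d) = M0 powr ?e * K powr (-(\<gamma>/?d))" by (rule pw_alg[OF M0 K0])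
        also have "K powr (-(\<gamma>/?d)) = N powr (-(\<gamma>/(2*?d)))"
          unfolding K_def using N by (simp add: powr_half_sqrt[symmetric] powr_powr)
        also have "-(\<gamma>/(2*?d)) = \<gamma>/(2*?d) + (- \<gamma> / ?d)" by (simp add: field_simps)
        also have "N powr (\<gamma>/(2*?d) + (- \<gamma> / ?d)) = N powr (\<gamma>/(2*?d)) * N powr (- \<gamma> / ?d)" by (rule powr_add)
        finally show ?thesis .
      qed
      have t2: "m2 * (m2/N) powr (\<gamma>/?d) = ?Hp powr ?e * ((ln N / 2) powr (-?e) * N powr (- \<gamma> / ?d))"
      proof -
        have "m2 * (m2/N) powr (\<gamma>/?d) = m2 powr ?e * N powr (-(\<gamma>/?d))" by (rule pw_alg[OF m2 N])
        also have "m2 powr ?e = ?Hp powr ?e * (ln K) powr (-?e)"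
        proof -
          have "(?Hp / ln K) powr ?e = ?Hp powr ?e / ln K powr ?e" by (rule powr_divide)
          also have "\<dots> = ?Hp powr ?e * ln K powr (-?e)" by (simp only: powr_minus divide_inverse)
          finally show ?thesis unfolding m2_def .
        qed
        finally show ?thesis unfolding lK by (simp add: mult.assoc)
      qed
      have "M0 powr ?e * (N powr (\<gamma>/(2*?d))) * N powr (- \<gamma> / ?d) + ?Hp powr ?e * ((ln N / 2) powr (-?e)) * N powr (- \<gamma> / ?d)
          \<le> (M0 powr ?e + ?Hp powr ?e) * (N powr (\<gamma>/(2*?d)) + (ln N / 2) powr (-?e)) * N powr (- \<gamma> / ?d)"
        by (rule sum_le_prod) auto
      also have "\<dots> = (M0 powr ?e + ?Hp powr ?e) * (N powr (- \<gamma> / ?d) * psi \<gamma> ?d N)"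
        using False unfolding psi_def by simp
      finally have "M0 * (M0/K) powr (\<gamma>/?d) + m2 * (m2/N) powr (\<gamma>/?d) \<le> (M0 powr ?e + ?Hp powr ?e) * (N powr (- \<gamma> / ?d) * psi \<gamma> ?d N)"
        unfolding t1 t2 by (simp add: mult.assoc)
      hence "?c * (M0 * (M0/K) powr (\<gamma>/?d) + m2 * (m2/N) powr (\<gamma>/?d)) \<le> ?c * ((M0 powr ?e + ?Hp powr ?e) * (N powr (- \<gamma> / ?d) * psi \<gamma> ?d N))"
        using c by (intro mult_left_mono) auto
      then show ?thesis by (simp add: algebra_simps)
    qed
    finally show ?thesis by (simp add: ennreal_leI)
  qed
  show ?thesis by (rule nn_to_lint[OF Fm[OF fm] _ main R0]) (use f0 in auto)
qed

lemma kern_bound: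
  fixes v w :: "'a::real_normed_vector" and \<gamma> :: real
  assumes "0 \<le> \<gamma>" "\<gamma> \<le> 2"
  shows "norm (v - w) powr \<gamma> \<le> (1 + norm v) powr \<gamma> * (2 * (1 + norm w ^ 2))"
proof -
  let ?a = "norm v" and ?b = "norm w"
  have "norm (v - w) \<le> ?a + ?b" by (rule norm_triangle_ineq4)
  also have "\<dots> \<le> (1 + ?a) * (1 + ?b)" by (simp add: algebra_simps)
  finally have n: "norm (v - w) \<le> (1 + ?a) * (1 + ?b)" .
  have "norm (v - w) powr \<gamma> \<le> ((1 + ?a) * (1 + ?b)) powr \<gamma>" by (rule powr_mono2) (use assms n in auto)
  also have "\<dots> = (1 + ?a) powr \<gamma> * (1 + ?b) powr \<gamma>" by (rule powr_mult)
  also have "(1 + ?b) powr \<gamma> \<le> 2 * (1 + ?b ^ 2)"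
  proof -
    have "(1 + ?b) powr \<gamma> \<le> (1 + ?b) powr 2" by (rule powr_mono) (use assms in auto)
    also have "\<dots> = (1 + ?b)^2" by (simp add: powr_realpow)
    also have "\<dots> \<le> 2 * (1 + ?b ^ 2)"
    proof -
      have "0 \<le> (?b - 1)^2" by simp
      moreover have "(?b - 1)^2 = ?b^2 - 2*?b + 1" "(1 + ?b)^2 = 1 + 2*?b + ?b^2" "2 * (1 + ?b ^ 2) = 2 + 2 * ?b^2" by (simp_all add: power2_eq_square algebra_simps)
      ultimately show ?thesis by linarith
    qed
    finally show ?thesis .
  qed
  hence "(1 + ?a) powr \<gamma> * (1 + ?b) powr \<gamma> \<le> (1 + ?a) powr \<gamma> * (2 * (1 + ?b ^ 2))"
    by (intro mult_left_mono) auto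
  finally show ?thesis .
qed

lemma partA:
  fixes f :: "real^'n \<Rightarrow> real" and v :: "real^'n"
  assumes g: "0 \<le> \<gamma>" "\<gamma> \<le> 2" and hb: "hydro_bounds m0 M0 E0 H0 f"
  shows "(LINT w|lborel. f w * norm (v - w) powr \<gamma>) \<le> (1 + norm v) powr \<gamma> * (2 * (M0 + E0))"
proof -
  have fm: "f \<in> borel_measurable lborel" and f0: "\<And>v. 0 \<le> f v" and fi: "integrable lborel f"
    and f2: "integrable lborel (\<lambda>v. f v * norm v ^ 2)"
    and M: "(LINT v|lborel. f v) \<le> M0" and E: "(LINT v|lborel. f v * norm v ^ 2) \<le> E0"
    using hb unfolding hydro_bounds_def by auto
  let ?c = "(1 + norm v) powr \<gamma> * 2"
  define Bd where "Bd w = ?c * (f w + f w * norm w ^ 2)" for w :: "real^'n"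
  have Bi: "integrable lborel Bd" unfolding Bd_def using fi f2 by auto
  have pb: "f w * norm (v - w) powr \<gamma> \<le> Bd w" for w
  proof -
    have "f w * norm (v - w) powr \<gamma> \<le> f w * ((1 + norm v) powr \<gamma> * (2 * (1 + norm w ^ 2)))"
      by (intro mult_left_mono kern_bound g f0)
    also have "\<dots> = Bd w" unfolding Bd_def by (simp add: algebra_simps)
    finally show ?thesis .
  qed
  have Fi: "integrable lborel (\<lambda>w. f w * norm (v - w) powr \<gamma>)"
  proof (rule Bochner_Integration.integrable_bound[OF Bi Fm[OF fm]])
    show "AE x in lborel. norm (f x * norm (v - x) powr \<gamma>) \<le> norm (Bd x)"
      using pb f0 by (auto intro!: AE_I2 order_trans[OF _ abs_ge_self])
  qed
  have "(LINT w|lborel. f w * norm (v - w) powr \<gamma>) \<le> integral\<^sup>L lborel Bd"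
    by (rule integral_mono[OF Fi Bi pb])
  also have "integral\<^sup>L lborel Bd = ?c * ((LINT w|lborel. f w) + (LINT w|lborel. f w * norm w ^ 2))"
    unfolding Bd_def using fi f2 by simp
  also have "\<dots> \<le> ?c * (M0 + E0)" using M E by (intro mult_left_mono) auto
  finally show ?thesis by (simp add: mult.assoc)
qed

lemma psi_pos: "r > 0 \<Longrightarrow> psi \<gamma> d r > 0"
  unfolding psi_def by (auto intro!: add_pos_nonneg)

lemma psi_lim:
  assumes "\<gamma> < 0" "d > 0" "d + \<gamma> > 0"
  shows "(psi \<gamma> d \<longlongrightarrow> 0) at_top"
proof -
  have ev: "\<forall>\<^sub>F r in at_top. r powr (\<gamma>/(2*d)) + (ln r / 2) powr (-(1+\<gamma>/d)) = psi \<gamma> d r"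
    using eventually_gt_at_top[of "exp 2"] by eventually_elim (auto simp: psi_def)
  have e1: "\<gamma>/(2*d) < 0" using assms by (simp add: divide_neg_pos)
  have e2: "-(1+\<gamma>/d) < 0"
  proof -
    have "0 < (d + \<gamma>)/d" using assms by simp
    also have "(d + \<gamma>)/d = 1 + \<gamma>/d" using assms by (simp add: field_simps)
    finally show ?thesis by simp
  qed
  have l1: "filterlim (\<lambda>r::real. ln r / 2) at_top at_top"
  proof -
    have "filterlim (\<lambda>r::real. (1/2) * ln r) at_top at_top"
      by (rule filterlim_tendsto_pos_mult_at_top[OF tendsto_const _ ln_at_top]) simp
    then show ?thesis by simp
  qed
  have "((\<lambda>r. r powr (\<gamma>/(2*d)) + (ln r / 2) powr (-(1+\<gamma>/d))) \<longlongrightarrow> 0 + 0) at_top"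
    by (intro tendsto_add tendsto_neg_powr[OF e1 filterlim_ident] tendsto_neg_powr[OF e2 l1])
  then show ?thesis using tendsto_cong[OF ev] by simp
qed

theorem proposition3p11:
  fixes s \<gamma> bt0 bt1 m0 M0 E0 H0 :: real
  assumes "CARD('n) \<ge> 2"
    and "0 < s" "s < 1" "0 \<le> \<gamma> + 2 * s" "\<gamma> + 2 * s \<le> 2"
    and "0 < bt0" "bt0 \<le> bt1" "0 < m0"
  shows "\<exists>C>0. \<exists>\<psi>::real \<Rightarrow> real. (\<forall>r>0. \<psi> r > 0) \<and> (\<psi> \<longlongrightarrow> 0) at_top \<and>
    (\<forall>(bt::real \<Rightarrow> real) (q::real) (N::real) (f::real^'n \<Rightarrow> real) (v::real^'n).
       smooth_near_interval bt \<and> (\<forall>x\<in>{-1..1}. bt0 \<le> bt x \<and> bt x \<le> bt1) \<and>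
       0 \<le> q \<and> 0 < N \<and> hydro_bounds m0 M0 E0 H0 f \<and>
       (\<forall>w. f w \<le> gfun N q w) \<and> f v = gfun N q v \<longrightarrow>
       (0 \<le> \<gamma> \<longrightarrow>
          Q_ns \<gamma> s bt f f v \<le> C * ((1 + norm v) powr \<gamma> * gfun N q v)) \<and>
       (\<gamma> < 0 \<longrightarrow>
          Q_ns \<gamma> s bt f f v \<le> C * (2 powr (- q * \<gamma> / real CARD('n)) *
               gfun N q v powr (1 - \<gamma> / real CARD('n)) + (1 + norm v) powr \<gamma> * gfun N q v)) \<and>
       (q = 0 \<and> - real CARD('n) < \<gamma> \<and> \<gamma> < 0 \<longrightarrow>
          Q_ns \<gamma> s bt f f v \<le> C * (gfun N q v powr (1 - \<gamma> / real CARD('n)) * \<psi> (gfun N q v)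
               + (1 + norm v) powr \<gamma> * gfun N q v)))"
proof -
  let ?d = "CARD('n)"
  have d2: "?d \<ge> 2" using assms(1) .
  have gm2: "\<gamma> > -2" using assms(3,4) by linarith
  have g2: "\<gamma> \<le> 2" using assms(2,5) by linarith
  have dg: "real ?d + \<gamma> > 0" using d2 gm2 by linarith
  define K0 where "K0 = \<bar>sphere_area (?d - 1)\<bar> * (bt1 * \<bar>set_lebesgue_integral lborel {0<..<pi/2} (Hf ?d \<gamma> s)\<bar>) + 1"
  have bt1: "bt1 > 0" using assms(6,7) by linarith
  have K0: "K0 > 0" unfolding K0_def using bt1 by (simp add: add_nonneg_pos)
  have CSb: "\<bar>C_S ?d \<gamma> s bt\<bar> \<le> K0" if "smooth_near_interval bt" "\<forall>x\<in>{-1..1}. bt0 \<le> bt x \<and> bt x \<le> bt1" for bt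
    using CS_bound[where s=s, OF d2 gm2 assms(6,7) that] unfolding K0_def by linarith
  have Qle: "Q_ns \<gamma> s bt f f v \<le> K0 * (f v * B)"
    if "\<bar>C_S ?d \<gamma> s bt\<bar> \<le> K0" "\<And>w. 0 \<le> f w" "(LINT w|lborel. f w * norm (v - w) powr \<gamma>) \<le> B"
    for bt and f :: "real^'n \<Rightarrow> real" and v B
  proof -
    let ?L = "LINT w|lborel. f w * norm (v - w) powr \<gamma>"
    have L0: "0 \<le> ?L" using that(2) by (intro integral_nonneg_AE) auto
    have fv: "0 \<le> f v" using that(2) .
    have "Q_ns \<gamma> s bt f f v = C_S ?d \<gamma> s bt * (f v * ?L)" unfolding Q_ns_def by (simp add: mult.assoc)
    also have "\<dots> \<le> \<bar>C_S ?d \<gamma> s bt\<bar> * (f v * ?L)" using fv L0 by (intro mult_right_mono) auto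
    also have "\<dots> \<le> K0 * (f v * B)"
      using that(1,3) fv L0 by (intro mult_mono) (auto intro: mult_left_mono order_trans)
    finally show ?thesis .
  qed
  show ?thesis
  proof (cases "\<gamma> < 0")
    case False
    hence g0: "0 \<le> \<gamma>" by simp
    define C where "C = K0 * (2 * (\<bar>M0\<bar> + \<bar>E0\<bar>) + 1)"
    have C: "C > 0" unfolding C_def using K0 by (simp add: add_nonneg_pos)
    show ?thesis
    proof (intro exI[of _ C] conjI C exI[of _ "\<lambda>r. inverse (r + 1)"])
      show "\<forall>r>0. inverse (r + 1) > (0::real)" by simp
      show "((\<lambda>r::real. inverse (r + 1)) \<longlongrightarrow> 0) at_top"
      proof (rule tendsto_inverse_0_at_top)
        show "filterlim (\<lambda>r::real. r + 1) at_top at_top"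
          using filterlim_tendsto_add_at_top[OF tendsto_const[of "1::real"] filterlim_ident]
          by (simp add: add.commute)
      qed
    next
      show "\<forall>(bt::real \<Rightarrow> real) (q::real) (N::real) (f::real^'n \<Rightarrow> real) (v::real^'n). smooth_near_interval bt \<and> (\<forall>x\<in>{-1..1}. bt0 \<le> bt x \<and> bt x \<le> bt1) \<and>
       0 \<le> q \<and> 0 < N \<and> hydro_bounds m0 M0 E0 H0 f \<and> (\<forall>w. f w \<le> gfun N q w) \<and> f v = gfun N q v \<longrightarrow> (0 \<le> \<gamma> \<longrightarrow>
          Q_ns \<gamma> s bt f f v \<le> C * ((1 + norm v) powr \<gamma> * gfun N q v)) \<and>
       (\<gamma> < 0 \<longrightarrow>
          Q_ns \<gamma> s bt f f v \<le> C * (2 powr (- q * \<gamma> / real CARD('n)) *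
               gfun N q v powr (1 - \<gamma> / real CARD('n)) + (1 + norm v) powr \<gamma> * gfun N q v)) \<and>
       (q = 0 \<and> - real CARD('n) < \<gamma> \<and> \<gamma> < 0 \<longrightarrow>
          Q_ns \<gamma> s bt f f v \<le> C * (gfun N q v powr (1 - \<gamma> / real CARD('n)) * (\<lambda>r. inverse (r + 1)) (gfun N q v)
               + (1 + norm v) powr \<gamma> * gfun N q v))"
      proof (intro allI impI)
      fix bt :: "real \<Rightarrow> real" and q N :: real and f :: "real^'n \<Rightarrow> real" and v :: "real^'n"
      assume H: "smooth_near_interval bt \<and> (\<forall>x\<in>{-1..1}. bt0 \<le> bt x \<and> bt x \<le> bt1) \<and>
       0 \<le> q \<and> 0 < N \<and> hydro_bounds m0 M0 E0 H0 f \<and> (\<forall>w. f w \<le> gfun N q w) \<and> f v = gfun N q v"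
      hence hb: "hydro_bounds m0 M0 E0 H0 f" and fv: "f v = gfun N q v" and N: "N > 0" by auto
      have f0: "\<And>w. 0 \<le> f w" using hb unfolding hydro_bounds_def by auto
      have cs: "\<bar>C_S ?d \<gamma> s bt\<bar> \<le> K0" using CSb H by auto
      have "Q_ns \<gamma> s bt f f v \<le> K0 * (f v * ((1 + norm v) powr \<gamma> * (2 * (M0 + E0))))"
        using Qle[of bt f v, OF cs] f0 partA[OF g0 g2 hb] by blast
      also have "\<dots> = K0 * (2 * (M0 + E0)) * ((1 + norm v) powr \<gamma> * gfun N q v)"
        unfolding fv by (simp add: mult_ac)
      also have "\<dots> \<le> C * ((1 + norm v) powr \<gamma> * gfun N q v)"
        unfolding C_def using K0 gfun_pos[OF N, of q v]
        by (intro mult_right_mono mult_left_mono) auto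
      finally have p1: "Q_ns \<gamma> s bt f f v \<le> C * ((1 + norm v) powr \<gamma> * gfun N q v)" .
      show "(0 \<le> \<gamma> \<longrightarrow>
          Q_ns \<gamma> s bt f f v \<le> C * ((1 + norm v) powr \<gamma> * gfun N q v)) \<and>
       (\<gamma> < 0 \<longrightarrow>
          Q_ns \<gamma> s bt f f v \<le> C * (2 powr (- q * \<gamma> / real CARD('n)) *
               gfun N q v powr (1 - \<gamma> / real CARD('n)) + (1 + norm v) powr \<gamma> * gfun N q v)) \<and>
       (q = 0 \<and> - real CARD('n) < \<gamma> \<and> \<gamma> < 0 \<longrightarrow>
          Q_ns \<gamma> s bt f f v \<le> C * (gfun N q v powr (1 - \<gamma> / real CARD('n)) * (\<lambda>r. inverse (r + 1)) (gfun N q v)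
               + (1 + norm v) powr \<gamma> * gfun N q v))" using p1 False by simp
      qed
    qed
  next
    case True
    define K1 where "K1 = (cK ?d \<gamma> + 1) * (M0 powr (1 + \<gamma>/?d) + M0 * 4 powr (-\<gamma>))"
    define K2 where "K2 = (cK ?d \<gamma> + 1) * (M0 powr (1 + \<gamma>/?d) + (\<bar>Hc ?d H0 M0 E0\<bar> + 1) powr (1 + \<gamma>/?d))"
    define C where "C = K0 * (\<bar>K1\<bar> + \<bar>K2\<bar> + 1)"
    have C: "C > 0" unfolding C_def using K0 by (simp add: add_nonneg_pos)
    show ?thesis
    proof (intro exI[of _ C] conjI C exI[of _ "psi \<gamma> ?d"])
      show "\<forall>r>0. psi \<gamma> ?d r > 0" using psi_pos by blast
      show "(psi \<gamma> ?d \<longlongrightarrow> 0) at_top" by (rule psi_lim) (use True dg in auto)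
    next
      show "\<forall>(bt::real \<Rightarrow> real) (q::real) (N::real) (f::real^'n \<Rightarrow> real) (v::real^'n). smooth_near_interval bt \<and> (\<forall>x\<in>{-1..1}. bt0 \<le> bt x \<and> bt x \<le> bt1) \<and>
       0 \<le> q \<and> 0 < N \<and> hydro_bounds m0 M0 E0 H0 f \<and> (\<forall>w. f w \<le> gfun N q w) \<and> f v = gfun N q v \<longrightarrow> (0 \<le> \<gamma> \<longrightarrow>
          Q_ns \<gamma> s bt f f v \<le> C * ((1 + norm v) powr \<gamma> * gfun N q v)) \<and>
       (\<gamma> < 0 \<longrightarrow>
          Q_ns \<gamma> s bt f f v \<le> C * (2 powr (- q * \<gamma> / real CARD('n)) *
               gfun N q v powr (1 - \<gamma> / real CARD('n)) + (1 + norm v) powr \<gamma> * gfun N q v)) \<and>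
       (q = 0 \<and> - real CARD('n) < \<gamma> \<and> \<gamma> < 0 \<longrightarrow>
          Q_ns \<gamma> s bt f f v \<le> C * (gfun N q v powr (1 - \<gamma> / real CARD('n)) * psi \<gamma> ?d (gfun N q v)
               + (1 + norm v) powr \<gamma> * gfun N q v))"
      proof (intro allI impI)
      fix bt :: "real \<Rightarrow> real" and q N :: real and f :: "real^'n \<Rightarrow> real" and v :: "real^'n"
      assume H: "smooth_near_interval bt \<and> (\<forall>x\<in>{-1..1}. bt0 \<le> bt x \<and> bt x \<le> bt1) \<and>
       0 \<le> q \<and> 0 < N \<and> hydro_bounds m0 M0 E0 H0 f \<and> (\<forall>w. f w \<le> gfun N q w) \<and> f v = gfun N q v"
      hence hb: "hydro_bounds m0 M0 E0 H0 f" and fv: "f v = gfun N q v" and N: "N > 0" and q: "q \<ge> 0"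
        and fle: "\<And>w. f w \<le> gfun N q w" by auto
      have fm: "f \<in> borel_measurable lborel" and f0: "\<And>w. 0 \<le> f w" and fi: "integrable lborel f"
        and M: "(LINT v|lborel. f v) \<le> M0" and m: "m0 \<le> (LINT v|lborel. f v)"
        using hb unfolding hydro_bounds_def by auto
      have M0: "M0 > 0" using M m assms(8) by linarith
      have nnf: "(\<integral>\<^sup>+w. ennreal (f w) \<partial>lborel) \<le> ennreal M0"
      proof -
        have "(\<integral>\<^sup>+w. ennreal (f w) \<partial>lborel) = ennreal (LINT v|lborel. f v)"
          by (rule nn_integral_eq_integral) (use fi f0 in auto)
        then show ?thesis using M by (simp add: ennreal_leI)
      qed
      have cs: "\<bar>C_S ?d \<gamma> s bt\<bar> \<le> K0" using CSb H by auto
      let ?g = "gfun N q v"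
      have gp: "?g > 0" by (rule gfun_pos[OF N])
      have gg: "?g powr (1 - \<gamma> / real ?d) = ?g * ?g powr (- \<gamma> / real ?d)"
      proof -
        have e: "1 - \<gamma> / real ?d = 1 + (- \<gamma> / real ?d)" by simp
        have "?g powr (1 - \<gamma> / real ?d) = ?g powr 1 * ?g powr (- \<gamma> / real ?d)" unfolding e by (rule powr_add)
        then show ?thesis using gp by simp
      qed
      have p1: "0 \<le> \<gamma> \<longrightarrow> Q_ns \<gamma> s bt f f v \<le> C * ((1 + norm v) powr \<gamma> * ?g)" using True by auto
      have p2: "\<gamma> < 0 \<longrightarrow> Q_ns \<gamma> s bt f f v \<le> C * (2 powr (- q * \<gamma> / real CARD('n)) *
               ?g powr (1 - \<gamma> / real CARD('n)) + (1 + norm v) powr \<gamma> * ?g)"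
      proof
        let ?X = "2 powr (- q * \<gamma> / real ?d) * ?g powr (- \<gamma> / real ?d) + (1 + norm v) powr \<gamma>"
        have "Q_ns \<gamma> s bt f f v \<le> K0 * (f v * (K1 * ?X))"
        proof -
          have L: "(LINT w|lborel. f w * norm (v - w) powr \<gamma>) \<le> K1 * ?X"
            unfolding K1_def by (rule partB[OF True dg fm f0 nnf M0 q N fle])
          show ?thesis using Qle[of bt f v, OF cs] f0 L by blast
        qed
        also have "f v * (K1 * ?X) = K1 * (2 powr (- q * \<gamma> / real ?d) * ?g powr (1 - \<gamma> / real ?d) + (1 + norm v) powr \<gamma> * ?g)"
          unfolding fv gg by (simp add: algebra_simps)
        also have "K0 * \<dots> \<le> C * (2 powr (- q * \<gamma> / real ?d) * ?g powr (1 - \<gamma> / real ?d) + (1 + norm v) powr \<gamma> * ?g)"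
        proof -
          let ?Y = "2 powr (- q * \<gamma> / real ?d) * ?g powr (1 - \<gamma> / real ?d) + (1 + norm v) powr \<gamma> * ?g"
          have Y: "0 \<le> ?Y" using gp by simp
          have "K1 * ?Y \<le> (\<bar>K1\<bar> + \<bar>K2\<bar> + 1) * ?Y" by (intro mult_right_mono) (use Y in auto)
          hence "K0 * (K1 * ?Y) \<le> K0 * ((\<bar>K1\<bar> + \<bar>K2\<bar> + 1) * ?Y)" using K0 by (intro mult_left_mono) auto
          then show ?thesis by (simp add: C_def mult.assoc)
        qed
        finally show "Q_ns \<gamma> s bt f f v \<le> C * (2 powr (- q * \<gamma> / real ?d) * ?g powr (1 - \<gamma> / real ?d) + (1 + norm v) powr \<gamma> * ?g)" .
      qed
      have p3: "q = 0 \<and> - real CARD('n) < \<gamma> \<and> \<gamma> < 0 \<longrightarrow>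
          Q_ns \<gamma> s bt f f v \<le> C * (?g powr (1 - \<gamma> / real CARD('n)) * psi \<gamma> ?d ?g + (1 + norm v) powr \<gamma> * ?g)"
      proof
        assume "q = 0 \<and> - real CARD('n) < \<gamma> \<and> \<gamma> < 0"
        hence q0: "q = 0" by simp
        have gN: "?g = N" unfolding q0 by (rule gfun_q0)
        have fN: "f w \<le> N" for w using fle[of w] unfolding q0 gfun_q0 .
        have "Q_ns \<gamma> s bt f f v \<le> K0 * (f v * (K2 * (N powr (- \<gamma> / real ?d) * psi \<gamma> ?d N)))"
        proof -
          have L: "(LINT w|lborel. f w * norm (v - w) powr \<gamma>) \<le> K2 * (N powr (- \<gamma> / real ?d) * psi \<gamma> ?d N)"
            unfolding K2_def by (rule partC[OF True dg hb M0 N fN])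
          show ?thesis using Qle[of bt f v, OF cs] f0 L by blast
        qed
        also have "f v * (K2 * (N powr (- \<gamma> / real ?d) * psi \<gamma> ?d N)) = K2 * (?g powr (1 - \<gamma> / real ?d) * psi \<gamma> ?d ?g)"
          unfolding fv gg unfolding gN by (simp add: algebra_simps)
        also have "K0 * \<dots> \<le> C * (?g powr (1 - \<gamma> / real ?d) * psi \<gamma> ?d ?g + (1 + norm v) powr \<gamma> * ?g)"
        proof -
          have a: "0 \<le> ?g powr (1 - \<gamma> / real ?d) * psi \<gamma> ?d ?g" using psi_pos[OF gp, of \<gamma> "real ?d"] by simp
          have b: "0 \<le> (1 + norm v) powr \<gamma> * ?g" using gp by simp
          have "K0 * (K2 * (?g powr (1 - \<gamma> / real ?d) * psi \<gamma> ?d ?g)) \<le> K0 * (\<bar>K2\<bar> * (?g powr (1 - \<gamma> / real ?d) * psi \<gamma> ?d ?g))"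
            using K0 a by (intro mult_left_mono mult_right_mono) auto
          also have "\<dots> \<le> C * (?g powr (1 - \<gamma> / real ?d) * psi \<gamma> ?d ?g)"
          proof -
            have "\<bar>K2\<bar> * (?g powr (1 - \<gamma> / real ?d) * psi \<gamma> ?d ?g) \<le> (\<bar>K1\<bar> + \<bar>K2\<bar> + 1) * (?g powr (1 - \<gamma> / real ?d) * psi \<gamma> ?d ?g)"
              by (intro mult_right_mono) (use a in auto)
            hence "K0 * (\<bar>K2\<bar> * (?g powr (1 - \<gamma> / real ?d) * psi \<gamma> ?d ?g)) \<le> K0 * ((\<bar>K1\<bar> + \<bar>K2\<bar> + 1) * (?g powr (1 - \<gamma> / real ?d) * psi \<gamma> ?d ?g))"
              using K0 by (intro mult_left_mono) auto
            then show ?thesis by (simp add: C_def mult.assoc)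
          qed
          also have "\<dots> \<le> C * (?g powr (1 - \<gamma> / real ?d) * psi \<gamma> ?d ?g + (1 + norm v) powr \<gamma> * ?g)"
            using C b by (intro mult_left_mono) auto
          finally show ?thesis .
        qed
        finally show "Q_ns \<gamma> s bt f f v \<le> C * (?g powr (1 - \<gamma> / real ?d) * psi \<gamma> ?d ?g + (1 + norm v) powr \<gamma> * ?g)" .
      qed
      show "(0 \<le> \<gamma> \<longrightarrow>
          Q_ns \<gamma> s bt f f v \<le> C * ((1 + norm v) powr \<gamma> * gfun N q v)) \<and>
       (\<gamma> < 0 \<longrightarrow>
          Q_ns \<gamma> s bt f f v \<le> C * (2 powr (- q * \<gamma> / real CARD('n)) *
               gfun N q v powr (1 - \<gamma> / real CARD('n)) + (1 + norm v) powr \<gamma> * gfun N q v)) \<and>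
       (q = 0 \<and> - real CARD('n) < \<gamma> \<and> \<gamma> < 0 \<longrightarrow>
          Q_ns \<gamma> s bt f f v \<le> C * (gfun N q v powr (1 - \<gamma> / real CARD('n)) * psi \<gamma> ?d (gfun N q v)
               + (1 + norm v) powr \<gamma> * gfun N q v))" using p1 p2 p3 by blast
      qed
    qed
  qed
qed

end
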